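(* Let $q\in\mathbb{C}$ with $|q|<1$, let $n$ be a positive integer and $m\ge0$ an integer. Then for every $x\in[0,1]$, $$[n]_q^m\,\mathbb{B}_{n,q}(x^m\mid x)=\sum_{k=0}^n\binom{n}{k}_q x^k\,[k]_q!\,q^{\binom{k}{2}}S(m,k:q).$$
   Context: For a number $x$, $[x]_q=\frac{1-q^x}{1-q}$; $[n]_q!=[n]_q\cdots[1]_q$, $[0]_q!=1$; $\binom{n}{k}_q=\frac{[n]_q!}{[k]_q![n-k]_q!}$ for $0\le k\le n$ and $0$ for $k>n$; $\binom{j}{2}=j(j-1)/2$. $(1-b)_q^n=\prod_{i=1}^n(1-bq^{i-1})$. For integers $k,n\ge0$, $B_{k,n}(x,q)=\binom{n}{k}_q x^k(1-x)_q^{n-k}$ if $n\ge k$ and $0$ otherwise. For $f\in C[0,1]$, $\mathbb{B}_{n,q}(f\mid x)=\sum_{k=0}^n B_{k,n}(x,q)f\!\left(\frac{[k]_q}{[n]_q}\right)$; here $f(t)=t^m$. The $q$-Stirling numbers of the second kind $S(m,k:q)$ are defined by $\frac{q^{-\binom{k}{2}}}{[k]_q!}\sum_{j=0}^k(-1)^{k-j}\binom{k}{j}_q q^{\binom{k-j}{2}}e^{[j]_q t}=\sum_{m=0}^\infty S(m,k:q)\frac{t^m}{m!}$, i.e. $S(m,k:q)=\frac{q^{-\binom{k}{2}}}{[k]_q!}\sum_{j=0}^k(-1)^{k-j}q^{\binom{k-j}{2}}\binom{k}{j}_q[j]_q^m$ (with $[0]_q^0=1$). *)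

theory Defs
  imports "HOL-Analysis.Analysis"
begin

definition qint :: "complex \<Rightarrow> nat \<Rightarrow> complex" where
  "qint q n = (1 - q ^ n) / (1 - q)"

definition qfact :: "complex \<Rightarrow> nat \<Rightarrow> complex" where
  "qfact q n = (\<Prod>i=1..n. qint q i)"

definition qbinom :: "complex \<Rightarrow> nat \<Rightarrow> nat \<Rightarrow> complex" where
  "qbinom q n k = (if k \<le> n then qfact q n / (qfact q k * qfact q (n - k)) else 0)"

text \<open>(1 - b)_q^n = prod_{i=1}^n (1 - b q^(i-1))\<close>
definition qpoch :: "complex \<Rightarrow> complex \<Rightarrow> nat \<Rightarrow> complex" where
  "qpoch q b n = (\<Prod>i=1..n. (1 - b * q ^ (i - 1)))"

definition qBernstein_basis :: "nat \<Rightarrow> nat \<Rightarrow> complex \<Rightarrow> complex \<Rightarrow> complex" where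
  "qBernstein_basis k n x q = (if k \<le> n then qbinom q n k * x ^ k * qpoch q x (n - k) else 0)"

definition qBernstein :: "nat \<Rightarrow> complex \<Rightarrow> (complex \<Rightarrow> complex) \<Rightarrow> complex \<Rightarrow> complex" where
  "qBernstein n q f x = (\<Sum>k=0..n. qBernstein_basis k n x q * f (qint q k / qint q n))"

definition qStirling2 :: "nat \<Rightarrow> nat \<Rightarrow> complex \<Rightarrow> complex" where
  "qStirling2 m k q = inverse (q ^ (k choose 2)) / qfact q k *
     (\<Sum>j=0..k. (-1) ^ (k - j) * q ^ ((k - j) choose 2) * qbinom q k j * qint q j ^ m)"

end

theory Submission
  imports Defs
begin

lemma swap_tri:
  fixes f :: "nat \<Rightarrow> nat \<Rightarrow> complex"
  shows "(\<Sum>k=0..n. \<Sum>j=0..k. f k j) = (\<Sum>j=0..n. \<Sum>k=j..n. f k j)"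
proof (induction n)
  case 0 then show ?case by simp
next
  case (Suc n)
  have "(\<Sum>j=0..Suc n. \<Sum>k=j..Suc n. f k j)
      = (\<Sum>j=0..n. \<Sum>k=j..Suc n. f k j) + f (Suc n) (Suc n)" by simp
  also have "(\<Sum>j=0..n. \<Sum>k=j..Suc n. f k j) = (\<Sum>j=0..n. (\<Sum>k=j..n. f k j) + f (Suc n) j)"
    by (rule sum.cong) (auto simp: sum.cl_ivl_Suc)
  finally show ?case using Suc by (simp add: sum.distrib)
qed

context
  fixes q :: complex
  assumes q1: "norm q < 1"
begin

lemma q_ne1: "1 - q \<noteq> 0"
  using q1 by auto

lemma qpow_ne1: "n \<ge> 1 \<Longrightarrow> 1 - q ^ n \<noteq> 0"
proof
  assume "n \<ge> 1" "1 - q ^ n = 0"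
  then have "norm (q ^ n) = 1" by (metis eq_iff_diff_eq_0 norm_one)
  moreover have "norm (q ^ n) < 1"
  proof -
    obtain k where k: "n = Suc k" using \<open>n \<ge> 1\<close> by (cases n) auto
    have "norm q ^ k \<le> 1" using q1 by (simp add: power_le_one)
    then have "norm q * norm q ^ k \<le> norm q" using q1
      by (simp add: mult_left_le)
    then show ?thesis using q1 k by (simp add: norm_power norm_mult)
  qed
  ultimately show False by simp
qed

lemma qint_nz: "n \<ge> 1 \<Longrightarrow> qint q n \<noteq> 0"
  using qpow_ne1 q_ne1 by (simp add: qint_def)

lemma qfact_nz: "qfact q n \<noteq> 0"
  unfolding qfact_def using qint_nz by (simp add: prod_zero_iff)

lemma qfact_Suc: "qfact q (Suc n) = qfact q n * qint q (Suc n)"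
  unfolding qfact_def by simp

lemma qint_add: "qint q (m + l) = qint q l + q ^ l * qint q m"
  using q_ne1 by (simp add: qint_def field_simps power_add)

lemma qbinom_0[simp]: "qbinom q r 0 = 1"
  using qfact_nz by (simp add: qbinom_def qfact_def)

lemma qbinom_gt[simp]: "r < k \<Longrightarrow> qbinom q r k = 0"
  by (simp add: qbinom_def)

lemma qbinom_refl[simp]: "qbinom q r r = 1"
  using qfact_nz by (simp add: qbinom_def qfact_def)

lemma qpascal:
  assumes "i \<le> r"
  shows "qbinom q (Suc r) (Suc i) = qbinom q r (Suc i) + q ^ (r - i) * qbinom q r i"
proof (cases "i = r")
  case True then show ?thesis by simp
next
  case False
  then obtain b where r: "r = i + Suc b" using assms
    by (metis add_Suc_right le_Suc_ex le_neq_implies_less less_iff_Suc_add)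
  have e1: "Suc r - Suc i = Suc b" "r - Suc i = b" "r - i = Suc b" using r by auto
  have key: "qint q (Suc r) = qint q (Suc b) + q ^ Suc b * qint q (Suc i)"
    using qint_add[of "Suc i" "Suc b"] r by simp
  have nz: "qfact q r \<noteq> 0" "qfact q i \<noteq> 0" "qfact q b \<noteq> 0"
    "qint q (Suc i) \<noteq> 0" "qint q (Suc b) \<noteq> 0" using qfact_nz qint_nz by auto
  show ?thesis
    unfolding qbinom_def using assms e1 r
    apply (simp add: qfact_Suc e1 del: add_Suc_right)
    using nz key by (simp add: field_simps)
qed

lemma qbinom_prod:
  assumes "j \<le> k" "k \<le> n"
  shows "qbinom q n k * qbinom q k j = qbinom q n j * qbinom q (n - j) (k - j)"
  using assms qfact_nz by (simp add: qbinom_def field_simps)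

lemma choose2_Suc: "Suc i choose 2 = (i choose 2) + i"
  by (simp add: numeral_2_eq_2)

lemma qbinom_thm:
  "qpoch q x r = (\<Sum>i=0..r. qbinom q r i * (-x) ^ i * q ^ (i choose 2))"
proof (induction r)
  case 0 then show ?case by (simp add: qpoch_def numeral_2_eq_2)
next
  case (Suc r)
  let ?S = "\<lambda>r. (\<Sum>i=0..r. qbinom q r i * (-x) ^ i * q ^ (i choose 2))"
  have p: "qpoch q x (Suc r) = qpoch q x r * (1 - x * q ^ r)"
    by (simp add: qpoch_def)
  have A: "(\<Sum>i=0..r. qbinom q r (Suc i) * (-x) ^ Suc i * q ^ (Suc i choose 2)) + 1 = ?S r"
  proof -
    have "?S r = 1 + (\<Sum>i=0..<r. qbinom q r (Suc i) * (-x) ^ Suc i * q ^ (Suc i choose 2))"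
      by (simp only: atLeast0AtMost atLeast0LessThan sum.atMost_shift) (simp add: numeral_2_eq_2)
    moreover have "(\<Sum>i=0..r. qbinom q r (Suc i) * (-x) ^ Suc i * q ^ (Suc i choose 2))
       = (\<Sum>i=0..<r. qbinom q r (Suc i) * (-x) ^ Suc i * q ^ (Suc i choose 2))"
      by (simp add: sum.last_plus)
    ultimately show ?thesis by simp
  qed
  have B: "(\<Sum>i=0..r. q ^ (r - i) * qbinom q r i * (-x) ^ Suc i * q ^ (Suc i choose 2))
      = - x * q ^ r * ?S r"
    unfolding sum_distrib_left
  proof (rule sum.cong)
    fix i assume "i \<in> {0..r}"
    then have "q ^ (r - i) * q ^ i = q ^ r" by (simp add: power_add[symmetric])
    then show "q ^ (r - i) * qbinom q r i * (-x) ^ Suc i * q ^ (Suc i choose 2)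
       = - x * q ^ r * (qbinom q r i * (-x) ^ i * q ^ (i choose 2))"
      by (simp add: choose2_Suc power_add algebra_simps)
  qed simp
  have "?S (Suc r) = 1 + (\<Sum>i=0..r. qbinom q (Suc r) (Suc i) * (-x) ^ Suc i * q ^ (Suc i choose 2))"
    by (simp only: atLeast0AtMost sum.atMost_Suc_shift) (simp add: numeral_2_eq_2)
  also have "\<dots> = 1 + (\<Sum>i=0..r. qbinom q r (Suc i) * (-x) ^ Suc i * q ^ (Suc i choose 2))
     + (\<Sum>i=0..r. q ^ (r - i) * qbinom q r i * (-x) ^ Suc i * q ^ (Suc i choose 2))"
    unfolding add.assoc sum.distrib[symmetric]
    by (rule arg_cong[where f="\<lambda>t. 1 + t"], rule sum.cong) (auto simp: qpascal algebra_simps)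
  also have "\<dots> = ?S r * (1 - x * q ^ r)" using A B by (simp add: algebra_simps)
  finally show ?case using p Suc by simp
qed

lemma shift_ivl: "(\<Sum>k=j..n. f k) = (\<Sum>i=0..n-j. f (j + i))" if "j \<le> n" for f :: "nat \<Rightarrow> complex"
proof -
  have e: "{j..n} = {0+j..(n-j)+j}" using that by simp
  show ?thesis unfolding e sum.shift_bounds_cl_nat_ivl by (simp add: add.commute)
qed

lemma generic:
  fixes g :: "nat \<Rightarrow> complex"
  shows "(\<Sum>j=0..n. qbinom q n j * x ^ j * qpoch q x (n - j) * g j)
   = (\<Sum>k=0..n. qbinom q n k * x ^ k *
        (\<Sum>j=0..k. (-1) ^ (k - j) * q ^ ((k - j) choose 2) * qbinom q k j * g j))"
proof -
  have "(\<Sum>k=0..n. qbinom q n k * x ^ k *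
        (\<Sum>j=0..k. (-1) ^ (k - j) * q ^ ((k - j) choose 2) * qbinom q k j * g j))
     = (\<Sum>k=0..n. \<Sum>j=0..k. qbinom q n k * x ^ k *
        ((-1) ^ (k - j) * q ^ ((k - j) choose 2) * qbinom q k j * g j))"
    by (simp add: sum_distrib_left)
  also have "\<dots> = (\<Sum>j=0..n. \<Sum>k=j..n. qbinom q n k * x ^ k *
        ((-1) ^ (k - j) * q ^ ((k - j) choose 2) * qbinom q k j * g j))"
    by (rule swap_tri)
  also have "\<dots> = (\<Sum>j=0..n. qbinom q n j * x ^ j * qpoch q x (n - j) * g j)"
  proof (rule sum.cong)
    fix j assume j: "j \<in> {0..n}"
    have "(\<Sum>k=j..n. qbinom q n k * x ^ k *
        ((-1) ^ (k - j) * q ^ ((k - j) choose 2) * qbinom q k j * g j))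
      = (\<Sum>i=0..n-j. qbinom q n (j+i) * x ^ (j+i) *
        ((-1) ^ i * q ^ (i choose 2) * qbinom q (j+i) j * g j))"
      using j by (subst shift_ivl) auto
    also have "\<dots> = (\<Sum>i=0..n-j. qbinom q n j * x ^ j * g j *
        (qbinom q (n - j) i * (-x) ^ i * q ^ (i choose 2)))"
    proof (rule sum.cong)
      fix i assume "i \<in> {0..n-j}"
      then have P: "qbinom q n (j+i) * qbinom q (j+i) j = qbinom q n j * qbinom q (n - j) i"
        using j qbinom_prod[of j "j+i" n] by simp
      show "qbinom q n (j+i) * x ^ (j+i) *
        ((-1) ^ i * q ^ (i choose 2) * qbinom q (j+i) j * g j) =
        qbinom q n j * x ^ j * g j * (qbinom q (n - j) i * (-x) ^ i * q ^ (i choose 2))"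
      proof -
        have m: "(-x) ^ i = (-1) ^ i * x ^ i" by (rule power_minus)
        have "qbinom q n (j+i) * x ^ (j+i) *
          ((-1) ^ i * q ^ (i choose 2) * qbinom q (j+i) j * g j)
          = (qbinom q n (j+i) * qbinom q (j+i) j) * (x ^ j * x ^ i * (-1) ^ i * q ^ (i choose 2) * g j)"
          by (simp only: power_add mult_ac)
        also have "\<dots> = (qbinom q n j * qbinom q (n - j) i) * (x ^ j * x ^ i * (-1) ^ i * q ^ (i choose 2) * g j)"
          using P by (simp only:)
        also have "\<dots> = qbinom q n j * x ^ j * g j * (qbinom q (n - j) i * (-x) ^ i * q ^ (i choose 2))"
          unfolding m by (simp only: mult_ac)
        finally show ?thesis .
      qed
    qed simp
    also have "\<dots> = qbinom q n j * x ^ j * qpoch q x (n - j) * g j"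
      by (simp add: qbinom_thm sum_distrib_left sum_distrib_right mult_ac)
    finally show "(\<Sum>k=j..n. qbinom q n k * x ^ k *
        ((-1) ^ (k - j) * q ^ ((k - j) choose 2) * qbinom q k j * g j)) =
      qbinom q n j * x ^ j * qpoch q x (n - j) * g j" .
  qed simp
  finally show ?thesis by simp
qed

end


lemma qint0: "i \<ge> 1 \<Longrightarrow> qint 0 i = 1"
  by (simp add: qint_def)

lemma qfact0: "qfact 0 i = 1"
  unfolding qfact_def by (rule prod.neutral) (simp add: qint0)

lemma qbinom0: "j \<le> k \<Longrightarrow> qbinom 0 k j = 1"
  by (simp add: qbinom_def qfact0)

lemma D0:
  assumes "k \<ge> 2"
  shows "(\<Sum>j=0..k. (-1) ^ (k - j) * (0::complex) ^ ((k - j) choose 2) * qbinom 0 k j * qint 0 j ^ m) = 0"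
proof -
  obtain t where k: "k = Suc (Suc t)" using assms by (metis add_2_eq_Suc le_Suc_ex)
  have z: "(\<Sum>j=0..t. (-1) ^ (k - j) * (0::complex) ^ ((k - j) choose 2) * qbinom 0 k j * qint 0 j ^ m) = 0"
  proof (rule sum.neutral, intro ballI)
    fix j assume "j \<in> {0..t}"
    then have "2 \<le> k - j" using k by auto
    then have "0 < (k - j) choose 2" by (simp add: zero_less_binomial_iff)
    then show "(-1) ^ (k - j) * (0::complex) ^ ((k - j) choose 2) * qbinom 0 k j * qint 0 j ^ m = 0"
      by simp
  qed
  show ?thesis
    unfolding k sum.atLeast0_atMost_Suc
    using z k by (simp add: qbinom0 qint0 numeral_2_eq_2)
qed

theorem corollary4:
  fixes q :: complex and n m :: nat and x :: real
  assumes "norm q < 1" and "n \<ge> 1" and "x \<in> {0..1}"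
  shows "qint q n ^ m * qBernstein n q (\<lambda>t. t ^ m) (complex_of_real x)
       = (\<Sum>k=0..n. qbinom q n k * complex_of_real x ^ k * qfact q k
              * q ^ (k choose 2) * qStirling2 m k q)"
proof -
  define y where "y = complex_of_real x"
  define D where "D k = (\<Sum>j=0..k. (-1) ^ (k - j) * q ^ ((k - j) choose 2) * qbinom q k j * qint q j ^ m)" for k
  have qn: "qint q n \<noteq> 0" using qint_nz[OF assms(1) assms(2)] .
  have "qint q n ^ m * qBernstein n q (\<lambda>t. t ^ m) y
      = (\<Sum>j=0..n. qbinom q n j * y ^ j * qpoch q y (n - j) * qint q j ^ m)"
    unfolding qBernstein_def sum_distrib_left
  proof (rule sum.cong)
    fix j assume "j \<in> {0..n}"
    then show "qint q n ^ m * (qBernstein_basis j n y q * (qint q j / qint q n) ^ m)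
      = qbinom q n j * y ^ j * qpoch q y (n - j) * qint q j ^ m"
      using qn by (simp add: qBernstein_basis_def power_divide)
  qed simp
  also have "\<dots> = (\<Sum>k=0..n. qbinom q n k * y ^ k * D k)"
    unfolding D_def by (rule generic[OF assms(1)])
  also have "\<dots> = (\<Sum>k=0..n. qbinom q n k * y ^ k * qfact q k * q ^ (k choose 2) * qStirling2 m k q)"
  proof (rule sum.cong)
    fix k assume "k \<in> {0..n}"
    have "qfact q k * q ^ (k choose 2) * qStirling2 m k q = D k"
    proof (cases "q = 0")
      case False
      then show ?thesis using qfact_nz[OF assms(1), of k]
        unfolding qStirling2_def D_def by (simp add: field_simps)
    next
      case True
      show ?thesis
      proof (cases "k \<ge> 2")
        case True
        then have "0 < k choose 2" by (simp add: zero_less_binomial_iff)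
        then show ?thesis using D0[OF True, of m] \<open>q = 0\<close> unfolding D_def by simp
      next
        case False
        then have "k choose 2 = 0" by simp
        then show ?thesis using qfact_nz[OF assms(1), of k]
          unfolding qStirling2_def D_def by (simp add: field_simps)
      qed
    qed
    then show "qbinom q n k * y ^ k * D k = qbinom q n k * y ^ k * qfact q k * q ^ (k choose 2) * qStirling2 m k q"
      by (simp add: mult.assoc)
  qed simp
  finally show ?thesis unfolding y_def .
qed

end
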